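(* (Generalized Artin's Lemma.) Let $G$ be a profinite group acting faithfully by automorphisms on a field $h$, such that for every $x\in h$ the stabilizer $S(x)=\{\sigma\in G:\sigma(x)=x\}$ is an open subgroup of $G$. Let $k=h^G$ be the subfield of $h$ of elements fixed by all of $G$. If $h/k$ is an outer extension, then $h/k$ is algebraic and Galois, and the action identifies $G$ with $\mathrm{Gal}(h/k)$ (i.e. $\mathrm{Gal}(h/k)=G$).
   Context: "Field" means a not necessarily commutative division ring. For a field extension $h/k$ and $x\in h$, $x$ is algebraic over $k$ if the subfield $k(x)$ generated by $k$ and $x$ is finite-dimensional both as a left and a right $k$-vector space; $h/k$ is algebraic if all elements of $h$ are algebraic over $k$. $h/k$ is outer if the only inner automorphism of $h$ fixing $k$ pointwise is the identity. $\mathrm{Gal}(h/k)$ is the group of automorphisms of $h$ fixing $k$ pointwise, and $h/k$ is Galois if the subfield of $h$ fixed by $\mathrm{Gal}(h/k)$ is $k$. *)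

theory Defs
  imports "HOL-Analysis.Analysis" "HOL-Algebra.Group"
begin

definition topological_group_on :: "('g, 'm) monoid_scheme \<Rightarrow> 'g topology \<Rightarrow> bool" where
  "topological_group_on G T \<longleftrightarrow> group G \<and> topspace T = carrier G
     \<and> continuous_map (prod_topology T T) T (\<lambda>(a, b). a \<otimes>\<^bsub>G\<^esub> b)
     \<and> continuous_map T T (\<lambda>a. inv\<^bsub>G\<^esub> a)"

definition totally_disconnected_space :: "'g topology \<Rightarrow> bool" where
  "totally_disconnected_space T \<longleftrightarrow> (\<forall>S. connectedin T S \<longrightarrow> (\<exists>a. S \<subseteq> {a}))"

definition profinite_group :: "('g, 'm) monoid_scheme \<Rightarrow> 'g topology \<Rightarrow> bool" where
  "profinite_group G T \<longleftrightarrow> topological_group_on G T \<and> compact_space T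
     \<and> Hausdorff_space T \<and> totally_disconnected_space T"

text \<open>The field h is the whole type 'a :: division_ring; subfields are subsets.\<close>

definition ring_automorphism :: "('a::division_ring \<Rightarrow> 'a) \<Rightarrow> bool" where
  "ring_automorphism f \<longleftrightarrow> bij f \<and> (\<forall>x y. f (x + y) = f x + f y)
     \<and> (\<forall>x y. f (x * y) = f x * f y) \<and> f 1 = 1"

definition is_subfield :: "'a::division_ring set \<Rightarrow> bool" where
  "is_subfield L \<longleftrightarrow> 0 \<in> L \<and> 1 \<in> L \<and> (\<forall>x\<in>L. \<forall>y\<in>L. x + y \<in> L \<and> x * y \<in> L)
     \<and> (\<forall>x\<in>L. - x \<in> L \<and> inverse x \<in> L)"

definition gen_subfield :: "'a::division_ring set \<Rightarrow> 'a \<Rightarrow> 'a set" where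
  "gen_subfield K x = \<Inter> {L. is_subfield L \<and> K \<subseteq> L \<and> x \<in> L}"

definition left_span :: "'a::division_ring set \<Rightarrow> 'a set \<Rightarrow> 'a set" where
  "left_span K S = {y. \<exists>c. (\<forall>s\<in>S. c s \<in> K) \<and> y = (\<Sum>s\<in>S. c s * s)}"

definition right_span :: "'a::division_ring set \<Rightarrow> 'a set \<Rightarrow> 'a set" where
  "right_span K S = {y. \<exists>c. (\<forall>s\<in>S. c s \<in> K) \<and> y = (\<Sum>s\<in>S. s * c s)}"

definition left_fin_dim :: "'a::division_ring set \<Rightarrow> 'a set \<Rightarrow> bool" where
  "left_fin_dim K L \<longleftrightarrow> (\<exists>S. finite S \<and> S \<subseteq> L \<and> L \<subseteq> left_span K S)"

definition right_fin_dim :: "'a::division_ring set \<Rightarrow> 'a set \<Rightarrow> bool" where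
  "right_fin_dim K L \<longleftrightarrow> (\<exists>S. finite S \<and> S \<subseteq> L \<and> L \<subseteq> right_span K S)"

definition algebraic_over :: "'a::division_ring set \<Rightarrow> 'a \<Rightarrow> bool" where
  "algebraic_over K x \<longleftrightarrow> left_fin_dim K (gen_subfield K x) \<and> right_fin_dim K (gen_subfield K x)"

definition algebraic_ext :: "'a::division_ring set \<Rightarrow> bool" where
  "algebraic_ext K \<longleftrightarrow> (\<forall>x. algebraic_over K x)"

definition outer_ext :: "'a::division_ring set \<Rightarrow> bool" where
  "outer_ext K \<longleftrightarrow> (\<forall>u. u \<noteq> 0 \<longrightarrow> (\<forall>x\<in>K. u * x * inverse u = x)
      \<longrightarrow> (\<forall>y. u * y * inverse u = y))"

definition Gal :: "'a::division_ring set \<Rightarrow> ('a \<Rightarrow> 'a) set" where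
  "Gal K = {f. ring_automorphism f \<and> (\<forall>x\<in>K. f x = x)}"

definition galois_ext :: "'a::division_ring set \<Rightarrow> bool" where
  "galois_ext K \<longleftrightarrow> {y. \<forall>f\<in>Gal K. f y = y} = K"

definition action_by_automorphisms ::
  "('g, 'm) monoid_scheme \<Rightarrow> ('g \<Rightarrow> 'a::division_ring \<Rightarrow> 'a) \<Rightarrow> bool" where
  "action_by_automorphisms G act \<longleftrightarrow>
     (\<forall>g\<in>carrier G. ring_automorphism (act g))
     \<and> (\<forall>g\<in>carrier G. \<forall>g'\<in>carrier G. act (g \<otimes>\<^bsub>G\<^esub> g') = act g \<circ> act g')
     \<and> act \<one>\<^bsub>G\<^esub> = id"

definition fixed_field :: "('g, 'm) monoid_scheme \<Rightarrow> ('g \<Rightarrow> 'a \<Rightarrow> 'a) \<Rightarrow> 'a set" where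
  "fixed_field G act = {x. \<forall>g\<in>carrier G. act g x = x}"

end

theory Submission
  imports Defs
begin


lemma ra_add: "ring_automorphism f \<Longrightarrow> f (x + y) = f x + f y"
  unfolding ring_automorphism_def by blast
lemma ra_mult: "ring_automorphism f \<Longrightarrow> f (x * y) = f x * f y"
  unfolding ring_automorphism_def by blast
lemma ra_1: "ring_automorphism f \<Longrightarrow> f 1 = 1"
  unfolding ring_automorphism_def by blast
lemma ra_0: "ring_automorphism f \<Longrightarrow> f 0 = 0"
proof -
  assume a: "ring_automorphism f"
  have "f (0 + 0) = f 0 + f 0" by (rule ra_add[OF a])
  then show ?thesis by simp
qed
lemma ra_uminus: "ring_automorphism f \<Longrightarrow> f (- x) = - f x"
proof -
  assume a: "ring_automorphism f"
  have "f (x + - x) = f x + f (- x)" by (rule ra_add[OF a])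
  then have "f x + f (- x) = 0" using ra_0[OF a] by simp
  then show ?thesis by (simp add: eq_neg_iff_add_eq_0 add.commute)
qed
lemma ra_diff: "ring_automorphism f \<Longrightarrow> f (x - y) = f x - f y"
  using ra_add[of f x "- y"] ra_uminus[of f y] by simp
lemma ra_inverse: "ring_automorphism f \<Longrightarrow> f (inverse x) = inverse (f x)"
proof (cases "x = 0")
  case True
  assume "ring_automorphism f"
  then show ?thesis using True ra_0[of f] by simp
next
  case False
  assume a: "ring_automorphism f"
  have "f x * f (inverse x) = 1" using ra_mult[OF a, of x "inverse x"] ra_1[OF a] False by simp
  then show ?thesis by (metis inverse_unique)
qed
lemma ra_sum: "ring_automorphism f \<Longrightarrow> f (sum g A) = (\<Sum>a\<in>A. f (g a))"
proof (induction A rule: infinite_finite_induct)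
  case (infinite A) then show ?case using ra_0 by simp
next
  case empty then show ?case using ra_0 by simp
next
  case (insert x F) then show ?case using ra_add[of f] by simp
qed

lemma LA_left:
  fixes a :: "'j \<Rightarrow> 'i \<Rightarrow> 'a::division_ring"
  assumes "finite I" "finite J" "card I < card J"
  shows "\<exists>c. (\<exists>j\<in>J. c j \<noteq> 0) \<and> (\<forall>i\<in>I. (\<Sum>j\<in>J. c j * a j i) = 0)"
  using assms
proof (induction I arbitrary: J a rule: finite_induct)
  case empty
  then obtain j0 where "j0 \<in> J" by fastforce
  then show ?case by (intro exI[of _ "\<lambda>j. 1"]) auto
next
  case (insert i0 I)
  show ?case
  proof (cases "\<forall>j\<in>J. a j i0 = 0")
    case True
    from insert.prems insert.hyps have "card I < card J" by simp
    then obtain c where c: "\<exists>j\<in>J. c j \<noteq> 0" "\<forall>i\<in>I. (\<Sum>j\<in>J. c j * a j i) = 0"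
      using insert.IH[OF insert.prems(1)] by blast
    show ?thesis using c True by (intro exI[of _ c]) auto
  next
    case False
    then obtain p where p: "p \<in> J" "a p i0 \<noteq> 0" by auto
    define J' where "J' = J - {p}"
    define a' where "a' j i = a j i - a j i0 * inverse (a p i0) * a p i" for j i
    have fJ': "finite J'" using insert.prems J'_def by simp
    have "card I < card J'" using insert p J'_def by (simp add: card_Diff_singleton)
    then obtain c' where c': "\<exists>j\<in>J'. c' j \<noteq> 0" "\<forall>i\<in>I. (\<Sum>j\<in>J'. c' j * a' j i) = 0"
      using insert.IH[OF fJ', of a'] by blast
    define c where "c j = (if j = p then - (\<Sum>j\<in>J'. c' j * a j i0) * inverse (a p i0) else c' j)" for j
    have sumJ: "(\<Sum>j\<in>J. c j * a j i) = c p * a p i + (\<Sum>j\<in>J'. c' j * a j i)" for i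
    proof -
      have "(\<Sum>j\<in>J. c j * a j i) = c p * a p i + (\<Sum>j\<in>J'. c j * a j i)"
        using p insert.prems(1) J'_def by (simp add: sum.remove)
      moreover have "(\<Sum>j\<in>J'. c j * a j i) = (\<Sum>j\<in>J'. c' j * a j i)"
        by (rule sum.cong) (auto simp: c_def J'_def)
      ultimately show ?thesis by simp
    qed
    show ?thesis
    proof (intro exI[of _ c] conjI ballI)
      show "\<exists>j\<in>J. c j \<noteq> 0" using c' J'_def c_def by auto
      fix i assume "i \<in> insert i0 I"
      then consider "i = i0" | "i \<in> I" by auto
      then show "(\<Sum>j\<in>J. c j * a j i) = 0"
      proof cases
        case 1
        have "c p * a p i0 = - (\<Sum>j\<in>J'. c' j * a j i0)"
          using p(2) by (simp add: c_def mult.assoc)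
        then show ?thesis using sumJ 1 by simp
      next
        case 2
        have "c p * a p i = - (\<Sum>j\<in>J'. c' j * a j i0 * inverse (a p i0) * a p i)"
          by (simp add: c_def sum_distrib_right mult.assoc)
        moreover have "(\<Sum>j\<in>J'. c' j * a' j i) = (\<Sum>j\<in>J'. c' j * a j i) - (\<Sum>j\<in>J'. c' j * a j i0 * inverse (a p i0) * a p i)"
          by (simp add: a'_def right_diff_distrib sum_subtractf mult.assoc)
        ultimately show ?thesis using sumJ c'(2) 2 by simp
      qed
    qed
  qed
qed

lemma LA_right:
  fixes a :: "'j \<Rightarrow> 'i \<Rightarrow> 'a::division_ring"
  assumes "finite I" "finite J" "card I < card J"
  shows "\<exists>c. (\<exists>j\<in>J. c j \<noteq> 0) \<and> (\<forall>i\<in>I. (\<Sum>j\<in>J. a j i * c j) = 0)"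
  using assms
proof (induction I arbitrary: J a rule: finite_induct)
  case empty
  then obtain j0 where "j0 \<in> J" by fastforce
  then show ?case by (intro exI[of _ "\<lambda>j. 1"]) auto
next
  case (insert i0 I)
  show ?case
  proof (cases "\<forall>j\<in>J. a j i0 = 0")
    case True
    from insert.prems insert.hyps have "card I < card J" by simp
    then obtain c where c: "\<exists>j\<in>J. c j \<noteq> 0" "\<forall>i\<in>I. (\<Sum>j\<in>J. a j i * c j) = 0"
      using insert.IH[OF insert.prems(1)] by blast
    show ?thesis using c True by (intro exI[of _ c]) auto
  next
    case False
    then obtain p where p: "p \<in> J" "a p i0 \<noteq> 0" by auto
    define J' where "J' = J - {p}"
    define a' where "a' j i = a j i - a p i * inverse (a p i0) * a j i0" for j i
    have fJ': "finite J'" using insert.prems J'_def by simp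
    have "card I < card J'" using insert p J'_def by (simp add: card_Diff_singleton)
    then obtain c' where c': "\<exists>j\<in>J'. c' j \<noteq> 0" "\<forall>i\<in>I. (\<Sum>j\<in>J'. a' j i * c' j) = 0"
      using insert.IH[OF fJ', of a'] by blast
    define c where "c j = (if j = p then - (inverse (a p i0) * (\<Sum>j\<in>J'. a j i0 * c' j)) else c' j)" for j
    have sumJ: "(\<Sum>j\<in>J. a j i * c j) = a p i * c p + (\<Sum>j\<in>J'. a j i * c' j)" for i
    proof -
      have "(\<Sum>j\<in>J. a j i * c j) = a p i * c p + (\<Sum>j\<in>J'. a j i * c j)"
        using p insert.prems(1) J'_def by (simp add: sum.remove)
      moreover have "(\<Sum>j\<in>J'. a j i * c j) = (\<Sum>j\<in>J'. a j i * c' j)"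
        by (rule sum.cong) (auto simp: c_def J'_def)
      ultimately show ?thesis by simp
    qed
    show ?thesis
    proof (intro exI[of _ c] conjI ballI)
      show "\<exists>j\<in>J. c j \<noteq> 0" using c' J'_def c_def by auto
      fix i assume "i \<in> insert i0 I"
      then consider "i = i0" | "i \<in> I" by auto
      then show "(\<Sum>j\<in>J. a j i * c j) = 0"
      proof cases
        case 1
        have "a p i0 * c p = - (\<Sum>j\<in>J'. a j i0 * c' j)"
          using p(2) by (simp add: c_def mult.assoc[symmetric])
        then show ?thesis using sumJ 1 by simp
      next
        case 2
        have "a p i * c p = - (\<Sum>j\<in>J'. a p i * inverse (a p i0) * a j i0 * c' j)"
          by (simp add: c_def sum_distrib_left mult.assoc)
        moreover have "(\<Sum>j\<in>J'. a' j i * c' j) = (\<Sum>j\<in>J'. a j i * c' j) - (\<Sum>j\<in>J'. a p i * inverse (a p i0) * a j i0 * c' j)"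
          by (simp add: a'_def left_diff_distrib sum_subtractf mult.assoc)
        ultimately show ?thesis using sumJ c'(2) 2 by simp
      qed
    qed
  qed
qed

definition left_indep :: "'a::division_ring set \<Rightarrow> 'a set \<Rightarrow> bool" where
  "left_indep K Y \<longleftrightarrow> (\<forall>c. (\<forall>y\<in>Y. c y \<in> K) \<and> (\<Sum>y\<in>Y. c y * y) = 0 \<longrightarrow> (\<forall>y\<in>Y. c y = 0))"
definition right_indep :: "'a::division_ring set \<Rightarrow> 'a set \<Rightarrow> bool" where
  "right_indep K Y \<longleftrightarrow> (\<forall>c. (\<forall>y\<in>Y. c y \<in> K) \<and> (\<Sum>y\<in>Y. y * c y) = 0 \<longrightarrow> (\<forall>y\<in>Y. c y = 0))"

lemma span_left:
  assumes K: "is_subfield K"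
    and bound: "\<And>Y. finite Y \<Longrightarrow> Y \<subseteq> F \<Longrightarrow> left_indep K Y \<Longrightarrow> card Y \<le> n"
  shows "\<exists>Y. finite Y \<and> Y \<subseteq> F \<and> card Y \<le> n \<and> F \<subseteq> left_span K Y"
proof -
  let ?P = "\<lambda>m. \<exists>Y. finite Y \<and> Y \<subseteq> F \<and> left_indep K Y \<and> card Y = m"
  have "?P 0" by (intro exI[of _ "{}"]) (auto simp: left_indep_def)
  moreover have "\<forall>m. ?P m \<longrightarrow> m \<le> n" using bound by blast
  ultimately obtain m where m: "?P m" "\<forall>m'. ?P m' \<longrightarrow> m' \<le> m"
    using Nat.ex_has_greatest_nat[of ?P 0 n] by blast
  then obtain Y where Y: "finite Y" "Y \<subseteq> F" "left_indep K Y" "card Y = m" by blast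
  have K0: "0 \<in> K" and K1: "1 \<in> K" and Km: "\<And>x y. x\<in>K \<Longrightarrow> y\<in>K \<Longrightarrow> x*y \<in> K"
    and Kn: "\<And>x. x\<in>K \<Longrightarrow> - x \<in> K" and Ki: "\<And>x. x\<in>K \<Longrightarrow> inverse x \<in> K"
    using K unfolding is_subfield_def by auto
  have "F \<subseteq> left_span K Y"
  proof
    fix z assume z: "z \<in> F"
    show "z \<in> left_span K Y"
    proof (cases "z \<in> Y")
      case True
      have "(\<Sum>s\<in>Y. (if s = z then 1 else 0) * s) = z"
      proof -
        have "(\<Sum>s\<in>Y. (if s = z then 1 else 0) * s) = (\<Sum>s\<in>Y. if s = z then s else 0)"
          by (rule sum.cong) auto
        also have "\<dots> = z" using True Y(1) by (simp add: sum.delta')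
        finally show ?thesis .
      qed
      then show ?thesis unfolding left_span_def using K0 K1
        by (intro CollectI exI[of _ "\<lambda>s. if s = z then 1 else 0"]) auto
    next
      case False
      have "\<not> left_indep K (insert z Y)"
      proof
        assume "left_indep K (insert z Y)"
        then have "?P (Suc m)" using Y z False by (intro exI[of _ "insert z Y"]) auto
        then show False using m(2) by fastforce
      qed
      then obtain c where c: "\<forall>y\<in>insert z Y. c y \<in> K" "(\<Sum>y\<in>insert z Y. c y * y) = 0"
        "\<exists>y\<in>insert z Y. c y \<noteq> 0" unfolding left_indep_def by blast
      have sum: "c z * z + (\<Sum>y\<in>Y. c y * y) = 0" using c(2) Y(1) False by simp
      have cz: "c z \<noteq> 0"
      proof
        assume "c z = 0"
        then have "(\<Sum>y\<in>Y. c y * y) = 0" using sum by simp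
        then have "\<forall>y\<in>Y. c y = 0" using Y(3) c(1) unfolding left_indep_def by blast
        then show False using c(3) \<open>c z = 0\<close> by auto
      qed
      have eq: "c z * z = - (\<Sum>y\<in>Y. c y * y)" using sum by (simp add: eq_neg_iff_add_eq_0)
      have "z = inverse (c z) * (c z * z)" using cz by (simp add: mult.assoc[symmetric])
      also have "\<dots> = (\<Sum>y\<in>Y. (- (inverse (c z) * c y)) * y)"
        unfolding eq by (simp add: sum_distrib_left mult.assoc sum_negf)
      finally have zeq: "z = (\<Sum>y\<in>Y. (- (inverse (c z) * c y)) * y)" .
      have "\<forall>y\<in>Y. - (inverse (c z) * c y) \<in> K" using c(1) Kn Km Ki by auto
      then show ?thesis unfolding left_span_def
        by (intro CollectI exI[of _ "\<lambda>y. - (inverse (c z) * c y)"] conjI) (assumption | rule zeq)+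
    qed
  qed
  then show ?thesis using Y bound by blast
qed


lemma span_right:
  assumes K: "is_subfield K"
    and bound: "\<And>Y. finite Y \<Longrightarrow> Y \<subseteq> F \<Longrightarrow> right_indep K Y \<Longrightarrow> card Y \<le> n"
  shows "\<exists>Y. finite Y \<and> Y \<subseteq> F \<and> card Y \<le> n \<and> F \<subseteq> right_span K Y"
proof -
  let ?P = "\<lambda>m. \<exists>Y. finite Y \<and> Y \<subseteq> F \<and> right_indep K Y \<and> card Y = m"
  have "?P 0" by (intro exI[of _ "{}"]) (auto simp: right_indep_def)
  moreover have "\<forall>m. ?P m \<longrightarrow> m \<le> n" using bound by blast
  ultimately obtain m where m: "?P m" "\<forall>m'. ?P m' \<longrightarrow> m' \<le> m"
    using Nat.ex_has_greatest_nat[of ?P 0 n] by blast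
  then obtain Y where Y: "finite Y" "Y \<subseteq> F" "right_indep K Y" "card Y = m" by blast
  have K0: "0 \<in> K" and K1: "1 \<in> K" and Km: "\<And>x y. x\<in>K \<Longrightarrow> y\<in>K \<Longrightarrow> x*y \<in> K"
    and Kn: "\<And>x. x\<in>K \<Longrightarrow> - x \<in> K" and Ki: "\<And>x. x\<in>K \<Longrightarrow> inverse x \<in> K"
    using K unfolding is_subfield_def by auto
  have "F \<subseteq> right_span K Y"
  proof
    fix z assume z: "z \<in> F"
    show "z \<in> right_span K Y"
    proof (cases "z \<in> Y")
      case True
      have "(\<Sum>s\<in>Y. s * (if s = z then 1 else 0)) = z"
      proof -
        have "(\<Sum>s\<in>Y. s * (if s = z then 1 else 0)) = (\<Sum>s\<in>Y. if s = z then s else 0)"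
          by (rule sum.cong) auto
        also have "\<dots> = z" using True Y(1) by (simp add: sum.delta')
        finally show ?thesis .
      qed
      then show ?thesis unfolding right_span_def using K0 K1
        by (intro CollectI exI[of _ "\<lambda>s. if s = z then 1 else 0"]) auto
    next
      case False
      have "\<not> right_indep K (insert z Y)"
      proof
        assume "right_indep K (insert z Y)"
        then have "?P (Suc m)" using Y z False by (intro exI[of _ "insert z Y"]) auto
        then show False using m(2) by fastforce
      qed
      then obtain c where c: "\<forall>y\<in>insert z Y. c y \<in> K" "(\<Sum>y\<in>insert z Y. y * c y) = 0"
        "\<exists>y\<in>insert z Y. c y \<noteq> 0" unfolding right_indep_def by blast
      have sum: "z * c z + (\<Sum>y\<in>Y. y * c y) = 0" using c(2) Y(1) False by simp
      have cz: "c z \<noteq> 0"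
      proof
        assume "c z = 0"
        then have "(\<Sum>y\<in>Y. y * c y) = 0" using sum by simp
        then have "\<forall>y\<in>Y. c y = 0" using Y(3) c(1) unfolding right_indep_def by blast
        then show False using c(3) \<open>c z = 0\<close> by auto
      qed
      have eq: "z * c z = - (\<Sum>y\<in>Y. y * c y)" using sum by (simp add: eq_neg_iff_add_eq_0)
      have "z = (z * c z) * inverse (c z)" using cz by (simp add: mult.assoc)
      also have "\<dots> = (\<Sum>y\<in>Y. y * (- (c y * inverse (c z))))"
        unfolding eq by (simp add: sum_distrib_right mult.assoc sum_negf)
      finally have zeq: "z = (\<Sum>y\<in>Y. y * (- (c y * inverse (c z))))" .
      have "\<forall>y\<in>Y. - (c y * inverse (c z)) \<in> K" using c(1) Kn Km Ki by auto
      then show ?thesis unfolding right_span_def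
        by (intro CollectI exI[of _ "\<lambda>y. - (c y * inverse (c z))"] conjI) (assumption | rule zeq)+
    qed
  qed
  then show ?thesis using Y bound by blast
qed




lemma artin_left:
  fixes \<Gamma> :: "('a::division_ring \<Rightarrow> 'a) set" and \<Phi> :: "('a \<Rightarrow> 'a) set"
  assumes aut: "\<And>\<sigma>. \<sigma>\<in>\<Gamma> \<Longrightarrow> ring_automorphism \<sigma>"
    and K: "\<And>y. (\<forall>\<sigma>\<in>\<Gamma>. \<sigma> y = y) \<Longrightarrow> y \<in> K"
    and fin: "finite \<Phi>"
    and clos: "\<And>\<sigma> \<phi>. \<sigma>\<in>\<Gamma> \<Longrightarrow> \<phi>\<in>\<Phi> \<Longrightarrow> \<exists>\<psi>\<in>\<Phi>. \<forall>y\<in>L. \<sigma> (\<psi> y) = \<phi> y"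
    and id0: "phiz \<in> \<Phi>" "\<And>y. y\<in>L \<Longrightarrow> phiz y = y"
    and Y: "finite Y" "Y \<subseteq> L" "left_indep K Y"
  shows "card Y \<le> card \<Phi>"
proof (rule ccontr)
  assume "\<not> card Y \<le> card \<Phi>"
  then have lt: "card \<Phi> < card Y" by simp
  define Sol where "Sol c \<longleftrightarrow> (\<forall>\<phi>\<in>\<Phi>. (\<Sum>y\<in>Y. c y * \<phi> y) = 0)" for c
  define supp where "supp c = {y\<in>Y. c y \<noteq> 0}" for c :: "'a \<Rightarrow> 'a"
  obtain c0 where c0: "\<exists>j\<in>Y. c0 j \<noteq> 0" "\<forall>\<phi>\<in>\<Phi>. (\<Sum>y\<in>Y. c0 y * \<phi> y) = 0"
    using LA_left[OF fin Y(1) lt, of "\<lambda>y \<phi>. \<phi> y"] by blast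
  define Q where "Q m \<longleftrightarrow> (\<exists>c. Sol c \<and> supp c \<noteq> {} \<and> card (supp c) = m)" for m
  have "Q (card (supp c0))" unfolding Q_def Sol_def supp_def using c0 by blast
  then have QL: "Q (LEAST m. Q m)" by (rule LeastI)
  then obtain c where c: "Sol c" "supp c \<noteq> {}" "card (supp c) = (LEAST m. Q m)"
    unfolding Q_def by blast
  have minimal: "\<And>d. Sol d \<Longrightarrow> card (supp d) < card (supp c) \<Longrightarrow> supp d = {}"
  proof (rule ccontr)
    fix d assume d: "Sol d" "card (supp d) < card (supp c)" "supp d \<noteq> {}"
    then have "Q (card (supp d))" unfolding Q_def by blast
    then have "(LEAST m. Q m) \<le> card (supp d)" by (rule Least_le)
    then show False using d(2) c(3) by simp
  qed
  obtain y0 where y0: "y0 \<in> Y" "c y0 \<noteq> 0" using c(2) unfolding supp_def by auto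
  define c' where "c' y = inverse (c y0) * c y" for y
  have supp': "supp c' = supp c" unfolding supp_def c'_def using y0 by auto
  have c'y0: "c' y0 = 1" unfolding c'_def using y0 by simp
  have Sol': "Sol c'"
    unfolding Sol_def
  proof
    fix \<phi> assume "\<phi> \<in> \<Phi>"
    then have "(\<Sum>y\<in>Y. c y * \<phi> y) = 0" using c(1) unfolding Sol_def by blast
    then show "(\<Sum>y\<in>Y. c' y * \<phi> y) = 0"
      unfolding c'_def by (simp add: mult.assoc sum_distrib_left[symmetric])
  qed
  have fixed: "\<sigma> (c' y) = c' y" if \<sigma>: "\<sigma> \<in> \<Gamma>" and y: "y \<in> Y" for \<sigma> y
  proof -
    define d where "d y = \<sigma> (c' y) - c' y" for y
    have Sold: "Sol d" unfolding Sol_def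
    proof
      fix \<phi> assume \<phi>: "\<phi> \<in> \<Phi>"
      obtain \<psi> where \<psi>: "\<psi> \<in> \<Phi>" "\<forall>y\<in>L. \<sigma> (\<psi> y) = \<phi> y" using clos[OF \<sigma> \<phi>] by blast
      have "(\<Sum>y\<in>Y. \<sigma> (c' y) * \<phi> y) = (\<Sum>y\<in>Y. \<sigma> (c' y * \<psi> y))"
        using \<psi>(2) Y(2) ra_mult[OF aut[OF \<sigma>]] by (intro sum.cong) auto
      also have "\<dots> = \<sigma> (\<Sum>y\<in>Y. c' y * \<psi> y)" by (rule ra_sum[OF aut[OF \<sigma>], symmetric])
      also have "\<dots> = 0" using Sol' \<psi>(1) ra_0[OF aut[OF \<sigma>]] unfolding Sol_def by simp
      finally have "(\<Sum>y\<in>Y. \<sigma> (c' y) * \<phi> y) = 0" .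
      moreover have "(\<Sum>y\<in>Y. c' y * \<phi> y) = 0" using Sol' \<phi> unfolding Sol_def by blast
      ultimately show "(\<Sum>y\<in>Y. d y * \<phi> y) = 0"
        unfolding d_def by (simp add: left_diff_distrib sum_subtractf)
    qed
    have "supp d \<subseteq> supp c - {y0}"
      unfolding supp'[symmetric] using c'y0 ra_0[OF aut[OF \<sigma>]] ra_1[OF aut[OF \<sigma>]]
      unfolding supp_def d_def by auto
    moreover have "y0 \<in> supp c" using y0 unfolding supp_def by simp
    moreover have "finite (supp c)" using Y(1) unfolding supp_def by simp
    ultimately have "card (supp d) < card (supp c)"
      by (metis Diff_iff insertI1 psubsetI psubset_card_mono subset_iff)
    then have "supp d = {}" using minimal Sold by blast
    then show ?thesis using y unfolding supp_def d_def by auto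
  qed
  have "(\<Sum>y\<in>Y. c' y * y) = 0"
  proof -
    have "(\<Sum>y\<in>Y. c' y * y) = (\<Sum>y\<in>Y. c' y * phiz y)" using id0(2) Y(2) by (intro sum.cong) auto
    then show ?thesis using Sol' id0(1) unfolding Sol_def by simp
  qed
  moreover have "\<forall>y\<in>Y. c' y \<in> K" using fixed K by blast
  ultimately have "c' y0 = 0" using Y(3) y0(1) unfolding left_indep_def by blast
  then show False using c'y0 by simp
qed


lemma artin_right:
  fixes \<Gamma> :: "('a::division_ring \<Rightarrow> 'a) set" and \<Phi> :: "('a \<Rightarrow> 'a) set"
  assumes aut: "\<And>\<sigma>. \<sigma>\<in>\<Gamma> \<Longrightarrow> ring_automorphism \<sigma>"
    and K: "\<And>y. (\<forall>\<sigma>\<in>\<Gamma>. \<sigma> y = y) \<Longrightarrow> y \<in> K"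
    and fin: "finite \<Phi>"
    and clos: "\<And>\<sigma> \<phi>. \<sigma>\<in>\<Gamma> \<Longrightarrow> \<phi>\<in>\<Phi> \<Longrightarrow> \<exists>\<psi>\<in>\<Phi>. \<forall>y\<in>L. \<sigma> (\<psi> y) = \<phi> y"
    and id0: "phiz \<in> \<Phi>" "\<And>y. y\<in>L \<Longrightarrow> phiz y = y"
    and Y: "finite Y" "Y \<subseteq> L" "right_indep K Y"
  shows "card Y \<le> card \<Phi>"
proof (rule ccontr)
  assume "\<not> card Y \<le> card \<Phi>"
  then have lt: "card \<Phi> < card Y" by simp
  define Sol where "Sol c \<longleftrightarrow> (\<forall>\<phi>\<in>\<Phi>. (\<Sum>y\<in>Y. \<phi> y * c y) = 0)" for c
  define supp where "supp c = {y\<in>Y. c y \<noteq> 0}" for c :: "'a \<Rightarrow> 'a"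
  obtain c0 where c0: "\<exists>j\<in>Y. c0 j \<noteq> 0" "\<forall>\<phi>\<in>\<Phi>. (\<Sum>y\<in>Y. \<phi> y * c0 y) = 0"
    using LA_right[OF fin Y(1) lt, of "\<lambda>y \<phi>. \<phi> y"] by blast
  define Q where "Q m \<longleftrightarrow> (\<exists>c. Sol c \<and> supp c \<noteq> {} \<and> card (supp c) = m)" for m
  have "Q (card (supp c0))" unfolding Q_def Sol_def supp_def using c0 by blast
  then have QL: "Q (LEAST m. Q m)" by (rule LeastI)
  then obtain c where c: "Sol c" "supp c \<noteq> {}" "card (supp c) = (LEAST m. Q m)"
    unfolding Q_def by blast
  have minimal: "\<And>d. Sol d \<Longrightarrow> card (supp d) < card (supp c) \<Longrightarrow> supp d = {}"
  proof (rule ccontr)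
    fix d assume d: "Sol d" "card (supp d) < card (supp c)" "supp d \<noteq> {}"
    then have "Q (card (supp d))" unfolding Q_def by blast
    then have "(LEAST m. Q m) \<le> card (supp d)" by (rule Least_le)
    then show False using d(2) c(3) by simp
  qed
  obtain y0 where y0: "y0 \<in> Y" "c y0 \<noteq> 0" using c(2) unfolding supp_def by auto
  define c' where "c' y = c y * inverse (c y0)" for y
  have supp': "supp c' = supp c" unfolding supp_def c'_def using y0 by auto
  have c'y0: "c' y0 = 1" unfolding c'_def using y0 by simp
  have Sol': "Sol c'"
    unfolding Sol_def
  proof
    fix \<phi> assume "\<phi> \<in> \<Phi>"
    then have "(\<Sum>y\<in>Y. \<phi> y * c y) = 0" using c(1) unfolding Sol_def by blast
    then show "(\<Sum>y\<in>Y. \<phi> y * c' y) = 0"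
      unfolding c'_def by (simp add: mult.assoc[symmetric] sum_distrib_right[symmetric])
  qed
  have fixed: "\<sigma> (c' y) = c' y" if \<sigma>: "\<sigma> \<in> \<Gamma>" and y: "y \<in> Y" for \<sigma> y
  proof -
    define d where "d y = \<sigma> (c' y) - c' y" for y
    have Sold: "Sol d" unfolding Sol_def
    proof
      fix \<phi> assume \<phi>: "\<phi> \<in> \<Phi>"
      obtain \<psi> where \<psi>: "\<psi> \<in> \<Phi>" "\<forall>y\<in>L. \<sigma> (\<psi> y) = \<phi> y" using clos[OF \<sigma> \<phi>] by blast
      have "(\<Sum>y\<in>Y. \<phi> y * \<sigma> (c' y)) = (\<Sum>y\<in>Y. \<sigma> (\<psi> y * c' y))"
        using \<psi>(2) Y(2) ra_mult[OF aut[OF \<sigma>]] by (intro sum.cong) auto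
      also have "\<dots> = \<sigma> (\<Sum>y\<in>Y. \<psi> y * c' y)" by (rule ra_sum[OF aut[OF \<sigma>], symmetric])
      also have "\<dots> = 0" using Sol' \<psi>(1) ra_0[OF aut[OF \<sigma>]] unfolding Sol_def by simp
      finally have "(\<Sum>y\<in>Y. \<phi> y * \<sigma> (c' y)) = 0" .
      moreover have "(\<Sum>y\<in>Y. \<phi> y * c' y) = 0" using Sol' \<phi> unfolding Sol_def by blast
      ultimately show "(\<Sum>y\<in>Y. \<phi> y * d y) = 0"
        unfolding d_def by (simp add: right_diff_distrib sum_subtractf)
    qed
    have "supp d \<subseteq> supp c - {y0}"
      unfolding supp'[symmetric] using c'y0 ra_0[OF aut[OF \<sigma>]] ra_1[OF aut[OF \<sigma>]]
      unfolding supp_def d_def by auto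
    moreover have "y0 \<in> supp c" using y0 unfolding supp_def by simp
    moreover have "finite (supp c)" using Y(1) unfolding supp_def by simp
    ultimately have "card (supp d) < card (supp c)"
      by (metis Diff_iff insertI1 psubsetI psubset_card_mono subset_iff)
    then have "supp d = {}" using minimal Sold by blast
    then show ?thesis using y unfolding supp_def d_def by auto
  qed
  have "(\<Sum>y\<in>Y. y * c' y) = 0"
  proof -
    have "(\<Sum>y\<in>Y. y * c' y) = (\<Sum>y\<in>Y. phiz y * c' y)" using id0(2) Y(2) by (intro sum.cong) auto
    then show ?thesis using Sol' id0(1) unfolding Sol_def by simp
  qed
  moreover have "\<forall>y\<in>Y. c' y \<in> K" using fixed K by blast
  ultimately have "c' y0 = 0" using Y(3) y0(1) unfolding right_indep_def by blast
  then show False using c'y0 by simp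
qed




lemma dedekind_outer:
  fixes M :: "('a::division_ring \<Rightarrow> 'a) set"
  assumes outer: "outer_ext K" and KL: "K \<subseteq> L" and L1: "1 \<in> L"
    and Lmul: "\<And>y z. y\<in>L \<Longrightarrow> z\<in>L \<Longrightarrow> z * y \<in> L"
    and M: "finite M"
    and mult: "\<And>\<phi> y z. \<phi>\<in>M \<Longrightarrow> y\<in>L \<Longrightarrow> z\<in>L \<Longrightarrow> \<phi> (z * y) = \<phi> z * \<phi> y"
    and one: "\<And>\<phi>. \<phi>\<in>M \<Longrightarrow> \<phi> 1 = 1"
    and fixK: "\<And>\<phi> k. \<phi>\<in>M \<Longrightarrow> k\<in>K \<Longrightarrow> \<phi> k = k"
    and dist: "\<And>\<phi> \<psi>. \<phi>\<in>M \<Longrightarrow> \<psi>\<in>M \<Longrightarrow> (\<forall>y\<in>L. \<phi> y = \<psi> y) \<Longrightarrow> \<phi> = \<psi>"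
    and rel: "\<And>y. y\<in>L \<Longrightarrow> (\<Sum>\<phi>\<in>M. c0 \<phi> * \<phi> y) = 0"
  shows "\<forall>\<phi>\<in>M. c0 \<phi> = 0"
proof (rule ccontr)
  assume "\<not> (\<forall>\<phi>\<in>M. c0 \<phi> = 0)"
  define Rel where "Rel c \<longleftrightarrow> (\<forall>y\<in>L. (\<Sum>\<phi>\<in>M. c \<phi> * \<phi> y) = 0)" for c
  define supp where "supp c = {\<phi>\<in>M. c \<phi> \<noteq> 0}" for c :: "('a \<Rightarrow> 'a) \<Rightarrow> 'a"
  define Q where "Q m \<longleftrightarrow> (\<exists>c. Rel c \<and> supp c \<noteq> {} \<and> card (supp c) = m)" for m
  have "Q (card (supp c0))" unfolding Q_def Rel_def supp_def using rel \<open>\<not> _\<close> by blast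
  then have QL: "Q (LEAST m. Q m)" by (rule LeastI)
  then obtain c where c: "Rel c" "supp c \<noteq> {}" "card (supp c) = (LEAST m. Q m)"
    unfolding Q_def by blast
  have minimal: "\<And>d. Rel d \<Longrightarrow> card (supp d) < card (supp c) \<Longrightarrow> supp d = {}"
  proof (rule ccontr)
    fix d assume d: "Rel d" "card (supp d) < card (supp c)" "supp d \<noteq> {}"
    then have "Q (card (supp d))" unfolding Q_def by blast
    then have "(LEAST m. Q m) \<le> card (supp d)" by (rule Least_le)
    then show False using d(2) c(3) by simp
  qed
  obtain \<phi>1 where \<phi>1: "\<phi>1 \<in> M" "c \<phi>1 \<noteq> 0" using c(2) unfolding supp_def by auto
  define c' where "c' \<phi> = inverse (c \<phi>1) * c \<phi>" for \<phi>
  have supp': "supp c' = supp c" unfolding supp_def c'_def using \<phi>1 by auto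
  have c'1: "c' \<phi>1 = 1" unfolding c'_def using \<phi>1 by simp
  have Rel': "Rel c'"
    unfolding Rel_def
  proof
    fix y assume "y \<in> L"
    then have "(\<Sum>\<phi>\<in>M. c \<phi> * \<phi> y) = 0" using c(1) unfolding Rel_def by blast
    then show "(\<Sum>\<phi>\<in>M. c' \<phi> * \<phi> y) = 0"
      unfolding c'_def by (simp add: mult.assoc sum_distrib_left[symmetric])
  qed
  have finc: "finite (supp c)" using M unfolding supp_def by simp
  have comm: "c' \<phi> * \<phi> z = \<phi>1 z * c' \<phi>" if \<phi>: "\<phi> \<in> M" and z: "z \<in> L" for \<phi> z
  proof -
    define e where "e \<phi> = c' \<phi> * \<phi> z - \<phi>1 z * c' \<phi>" for \<phi>
    have Rele: "Rel e" unfolding Rel_def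
    proof
      fix y assume y: "y \<in> L"
      have "(\<Sum>\<phi>\<in>M. (c' \<phi> * \<phi> z) * \<phi> y) = (\<Sum>\<phi>\<in>M. c' \<phi> * \<phi> (z * y))"
        using mult y z by (intro sum.cong) (auto simp: mult.assoc)
      also have "\<dots> = 0" using Rel' Lmul[OF y z] unfolding Rel_def by blast
      finally have A: "(\<Sum>\<phi>\<in>M. (c' \<phi> * \<phi> z) * \<phi> y) = 0" .
      have "(\<Sum>\<phi>\<in>M. (\<phi>1 z * c' \<phi>) * \<phi> y) = \<phi>1 z * (\<Sum>\<phi>\<in>M. c' \<phi> * \<phi> y)"
        by (simp add: sum_distrib_left mult.assoc)
      also have "\<dots> = 0" using Rel' y unfolding Rel_def by simp
      finally have B: "(\<Sum>\<phi>\<in>M. (\<phi>1 z * c' \<phi>) * \<phi> y) = 0" .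
      show "(\<Sum>\<phi>\<in>M. e \<phi> * \<phi> y) = 0"
        unfolding e_def using A B by (simp add: left_diff_distrib sum_subtractf)
    qed
    have "supp e \<subseteq> supp c - {\<phi>1}"
      unfolding supp'[symmetric] using c'1 unfolding supp_def e_def by auto
    moreover have "\<phi>1 \<in> supp c" using \<phi>1 unfolding supp_def by simp
    ultimately have "card (supp e) < card (supp c)" using finc
      by (metis Diff_iff insertI1 psubsetI psubset_card_mono subset_iff)
    then have "supp e = {}" using minimal Rele by blast
    then show ?thesis using \<phi> unfolding supp_def e_def by auto
  qed
  have "\<exists>\<phi>2\<in>M. \<phi>2 \<noteq> \<phi>1 \<and> c' \<phi>2 \<noteq> 0"
  proof (rule ccontr)
    assume "\<not> ?thesis"
    then have z: "\<forall>\<phi>\<in>M - {\<phi>1}. c' \<phi> * \<phi> 1 = 0" by auto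
    have "(\<Sum>\<phi>\<in>M. c' \<phi> * \<phi> 1) = c' \<phi>1 * \<phi>1 1 + (\<Sum>\<phi>\<in>M - {\<phi>1}. c' \<phi> * \<phi> 1)"
      using \<phi>1(1) M by (simp add: sum.remove)
    also have "\<dots> = 1" using c'1 one[OF \<phi>1(1)] sum.neutral[OF z] by simp
    finally show False using Rel' L1 unfolding Rel_def by simp
  qed
  then obtain \<phi>2 where \<phi>2: "\<phi>2 \<in> M" "\<phi>2 \<noteq> \<phi>1" "c' \<phi>2 \<noteq> 0" by blast
  define w where "w = c' \<phi>2"
  have "\<forall>x\<in>K. w * x * inverse w = x"
  proof
    fix x assume x: "x \<in> K"
    have "w * x = x * w" using comm[OF \<phi>2(1), of x] x KL fixK[OF \<phi>2(1) x] fixK[OF \<phi>1(1) x]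
      unfolding w_def by auto
    then show "w * x * inverse w = x" using \<phi>2(3) unfolding w_def by (simp add: mult.assoc)
  qed
  then have central: "\<And>y. w * y * inverse w = y" using outer \<phi>2(3) unfolding outer_ext_def w_def by blast
  have "\<forall>y\<in>L. \<phi>2 y = \<phi>1 y"
  proof
    fix y assume y: "y \<in> L"
    have "w * \<phi>2 y = \<phi>1 y * w" using comm[OF \<phi>2(1) y] unfolding w_def .
    also have "\<phi>1 y * w = w * \<phi>1 y"
    proof -
      have "w * \<phi>1 y = (w * \<phi>1 y * inverse w) * w" using \<phi>2(3) unfolding w_def by (simp add: mult.assoc)
      then show ?thesis using central[of "\<phi>1 y"] by simp
    qed
    finally show "\<phi>2 y = \<phi>1 y" using \<phi>2(3) unfolding w_def by simp
  qed
  then show False using dist[OF \<phi>2(1) \<phi>1(1)] \<phi>2(2) by blast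
qed




locale artin_setup = group G for G :: "('g, 'm) monoid_scheme" (structure) +
  fixes T :: "'g topology" and act :: "'g \<Rightarrow> 'a::division_ring \<Rightarrow> 'a"
  assumes prof: "profinite_group G T"
    and actA: "action_by_automorphisms G act"
    and stab: "\<And>x. openin T {g \<in> carrier G. act g x = x}"
begin

lemma topsp: "topspace T = carrier G"
  using prof unfolding profinite_group_def topological_group_on_def by blast

lemma cont_mult: "continuous_map (prod_topology T T) T (\<lambda>(a, b). a \<otimes> b)"
  using prof unfolding profinite_group_def topological_group_on_def by blast

lemma compactT: "compact_space T"
  using prof unfolding profinite_group_def by blast

lemma aut: "g \<in> carrier G \<Longrightarrow> ring_automorphism (act g)"
  using actA unfolding action_by_automorphisms_def by blast

lemma act_mult: "g \<in> carrier G \<Longrightarrow> h \<in> carrier G \<Longrightarrow> act (g \<otimes> h) y = act g (act h y)"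
  using actA unfolding action_by_automorphisms_def by (metis comp_apply)

lemma act_one: "act \<one> y = y"
  using actA unfolding action_by_automorphisms_def by simp

lemma left_mult_cont: "a \<in> carrier G \<Longrightarrow> continuous_map T T (\<lambda>b. a \<otimes> b)"
proof -
  assume a: "a \<in> carrier G"
  have "continuous_map T (prod_topology T T) (\<lambda>b. (a, b))"
    using a topsp by (intro continuous_map_pairedI) auto
  then have "continuous_map T T ((\<lambda>(a, b). a \<otimes> b) \<circ> (\<lambda>b. (a, b)))"
    using cont_mult by (rule continuous_map_compose)
  then show ?thesis by (simp add: o_def)
qed

lemma coset_open:
  assumes "g \<in> carrier G" "openin T S"
  shows "openin T {h \<in> topspace T. inv g \<otimes> h \<in> S}"
  using openin_continuous_map_preimage[OF left_mult_cont[of "inv g"] assms(2)] assms(1) by simp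

lemma finite_reps:
  assumes S: "openin T S" "\<one> \<in> S"
  shows "\<exists>R. finite R \<and> R \<subseteq> carrier G \<and> (\<forall>g\<in>carrier G. \<exists>r\<in>R. inv r \<otimes> g \<in> S)"
proof -
  define Oc where "Oc r = {h \<in> topspace T. inv r \<otimes> h \<in> S}" for r
  have "\<forall>U\<in>Oc ` carrier G. openin T U" using coset_open S(1) unfolding Oc_def by blast
  moreover have "topspace T \<subseteq> \<Union>(Oc ` carrier G)"
  proof
    fix g assume "g \<in> topspace T"
    then have "g \<in> carrier G" using topsp by simp
    then have "g \<in> Oc g" using S(2) topsp unfolding Oc_def by simp
    then show "g \<in> \<Union>(Oc ` carrier G)" using \<open>g \<in> carrier G\<close> by blast
  qed
  ultimately obtain F where F: "finite F" "F \<subseteq> Oc ` carrier G" "topspace T \<subseteq> \<Union>F"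
    using compactT unfolding compact_space_alt by meson
  then obtain R where R: "R \<subseteq> carrier G" "finite R" "F = Oc ` R"
    by (meson finite_subset_image)
  show ?thesis
  proof (intro exI[of _ R] conjI ballI)
    fix g assume "g \<in> carrier G"
    then obtain r where "r \<in> R" "g \<in> Oc r" using F(3) R(3) topsp by auto
    then show "\<exists>r\<in>R. inv r \<otimes> g \<in> S" unfolding Oc_def by blast
  qed (use R in auto)
qed

definition K where "K = fixed_field G act"

definition SX where "SX X = {g \<in> carrier G. \<forall>x\<in>X. act g x = x}"
definition LX where "LX X = {y. \<forall>s\<in>SX X. act s y = y}"
definition PhiX where "PhiX X = (\<lambda>g. restrict (act g) (LX X)) ` carrier G"

lemma SX_open: "finite X \<Longrightarrow> openin T (SX X)"
proof (induction X rule: finite_induct)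
  case empty
  then show ?case using topsp unfolding SX_def by (simp add: openin_topspace[of T, simplified topsp])
next
  case (insert x F)
  have "SX (insert x F) = {g \<in> carrier G. act g x = x} \<inter> SX F" unfolding SX_def by auto
  then show ?case using insert stab by (simp add: openin_Int)
qed

lemma SX_one: "\<one> \<in> SX X" unfolding SX_def using act_one by simp

lemma is_subfield_fix:
  assumes "A \<subseteq> carrier G"
  shows "is_subfield {y. \<forall>s\<in>A. act s y = y}"
  unfolding is_subfield_def using assms aut
  by (auto simp: ra_0 ra_1 ra_add ra_mult ra_uminus ra_inverse subset_iff)

lemma K_sub: "is_subfield K"
  unfolding K_def fixed_field_def by (rule is_subfield_fix) simp

lemma LX_sub: "is_subfield (LX X)"
  unfolding LX_def by (rule is_subfield_fix) (auto simp: SX_def)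

lemma K_LX: "K \<subseteq> LX X" unfolding K_def fixed_field_def LX_def SX_def by auto

lemma X_LX: "X \<subseteq> LX X" unfolding LX_def SX_def by auto

lemma PhiX_finite: "finite X \<Longrightarrow> finite (PhiX X)"
proof -
  assume X: "finite X"
  obtain R where R: "finite R" "R \<subseteq> carrier G" "\<forall>g\<in>carrier G. \<exists>r\<in>R. inv r \<otimes> g \<in> SX X"
    using finite_reps[OF SX_open[OF X] SX_one] by blast
  have "PhiX X \<subseteq> (\<lambda>r. restrict (act r) (LX X)) ` R"
  proof
    fix \<phi> assume "\<phi> \<in> PhiX X"
    then obtain g where g: "g \<in> carrier G" "\<phi> = restrict (act g) (LX X)" unfolding PhiX_def by blast
    then obtain r where r: "r \<in> R" "inv r \<otimes> g \<in> SX X" using R(3) by blast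
    have rG: "r \<in> carrier G" using r R(2) by blast
    have "g = r \<otimes> (inv r \<otimes> g)" using rG g(1) by (simp add: m_assoc[symmetric])
    then have "act g y = act r y" if "y \<in> LX X" for y
      using act_mult[OF rG, of "inv r \<otimes> g" y] rG g(1) r(2) that unfolding LX_def SX_def
      by auto
    then have "\<phi> = restrict (act r) (LX X)" using g(2) by (auto simp: restrict_def)
    then show "\<phi> \<in> (\<lambda>r. restrict (act r) (LX X)) ` R" using r(1) by blast
  qed
  then show ?thesis using R(1) finite_subset by blast
qed

end




context artin_setup begin

lemma clos_PhiX:
  assumes "\<sigma> \<in> act ` carrier G" "\<phi> \<in> PhiX X"
  shows "\<exists>\<psi>\<in>PhiX X. \<forall>y\<in>LX X. \<sigma> (\<psi> y) = \<phi> y"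
proof -
  obtain s where s: "s \<in> carrier G" "\<sigma> = act s" using assms(1) by blast
  obtain g where g: "g \<in> carrier G" "\<phi> = restrict (act g) (LX X)" using assms(2) unfolding PhiX_def by blast
  have sg: "s \<otimes> (inv s \<otimes> g) = g" using s(1) g(1) by (simp add: m_assoc[symmetric])
  show ?thesis
  proof (intro bexI[of _ "restrict (act (inv s \<otimes> g)) (LX X)"] ballI)
    show "restrict (act (inv s \<otimes> g)) (LX X) \<in> PhiX X" unfolding PhiX_def using s g by simp
    fix y assume "y \<in> LX X"
    then show "\<sigma> (restrict (act (inv s \<otimes> g)) (LX X) y) = \<phi> y"
      using act_mult[of s "inv s \<otimes> g" y] s g sg by simp
  qed
qed

lemma id_PhiX: "restrict (act \<one>) (LX X) \<in> PhiX X" unfolding PhiX_def by simp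

lemma bound_left:
  assumes "finite X" "finite Y" "Y \<subseteq> LX X" "left_indep K Y"
  shows "card Y \<le> card (PhiX X)"
  by (rule artin_left[where \<Gamma>="act ` carrier G" and L="LX X" and phiz="restrict (act \<one>) (LX X)"])
     (use assms aut clos_PhiX id_PhiX PhiX_finite act_one in \<open>auto simp: K_def fixed_field_def\<close>)

lemma bound_right:
  assumes "finite X" "finite Y" "Y \<subseteq> LX X" "right_indep K Y"
  shows "card Y \<le> card (PhiX X)"
  by (rule artin_right[where \<Gamma>="act ` carrier G" and L="LX X" and phiz="restrict (act \<one>) (LX X)"])
     (use assms aut clos_PhiX id_PhiX PhiX_finite act_one in \<open>auto simp: K_def fixed_field_def\<close>)

lemma gen_LX: "gen_subfield K x \<subseteq> LX {x}"
  unfolding gen_subfield_def using LX_sub K_LX X_LX[of "{x}"] by (intro Inter_lower) auto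

lemma algebraic: "algebraic_ext K"
  unfolding algebraic_ext_def algebraic_over_def
proof
  fix x
  have "\<exists>Y. finite Y \<and> Y \<subseteq> gen_subfield K x \<and> card Y \<le> card (PhiX {x}) \<and> gen_subfield K x \<subseteq> left_span K Y"
    by (rule span_left[OF K_sub]) (use bound_left gen_LX in blast)
  moreover have "\<exists>Y. finite Y \<and> Y \<subseteq> gen_subfield K x \<and> card Y \<le> card (PhiX {x}) \<and> gen_subfield K x \<subseteq> right_span K Y"
    by (rule span_right[OF K_sub]) (use bound_right gen_LX in blast)
  ultimately show "left_fin_dim K (gen_subfield K x) \<and> right_fin_dim K (gen_subfield K x)"
    unfolding left_fin_dim_def right_fin_dim_def by blast
qed

lemma act_Gal: "g \<in> carrier G \<Longrightarrow> act g \<in> Gal K"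
  unfolding Gal_def K_def fixed_field_def using aut by auto

lemma galois: "galois_ext K"
  unfolding galois_ext_def
proof
  show "{y. \<forall>f\<in>Gal K. f y = y} \<subseteq> K"
    using act_Gal unfolding K_def fixed_field_def by auto
  show "K \<subseteq> {y. \<forall>f\<in>Gal K. f y = y}" unfolding Gal_def by auto
qed

end




context artin_setup begin

lemma local_agree:
  assumes outer: "outer_ext K" and f: "f \<in> Gal K" and X: "finite X"
  shows "\<exists>g\<in>carrier G. \<forall>y\<in>LX X. act g y = f y"
proof (rule ccontr)
  assume nf: "\<not> ?thesis"
  define L where "L = LX X"
  define \<Phi> where "\<Phi> = PhiX X"
  have Lsub: "is_subfield L" unfolding L_def by (rule LX_sub)
  have KL: "K \<subseteq> L" unfolding L_def by (rule K_LX)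
  have finPhi: "finite \<Phi>" unfolding \<Phi>_def using PhiX_finite[OF X] .
  have fnot: "restrict f L \<notin> \<Phi>"
  proof
    assume "restrict f L \<in> \<Phi>"
    then obtain g where g: "g \<in> carrier G" "restrict f L = restrict (act g) L"
      unfolding \<Phi>_def PhiX_def L_def by blast
    have "\<forall>y\<in>LX X. act g y = f y"
    proof
      fix y assume "y \<in> LX X"
      then have "restrict f L y = f y" "restrict (act g) L y = act g y" unfolding L_def by simp_all
      then show "act g y = f y" using g(2) by simp
    qed
    then show False using nf g(1) by blast
  qed
  have "\<exists>Y. finite Y \<and> Y \<subseteq> L \<and> card Y \<le> card \<Phi> \<and> L \<subseteq> right_span K Y"
    by (rule span_right[OF K_sub]) (use bound_right[OF X] in \<open>simp add: L_def \<Phi>_def\<close>)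
  then obtain Y where Y: "finite Y" "Y \<subseteq> L" "card Y \<le> card \<Phi>" "L \<subseteq> right_span K Y"
    by blast
  define M where "M = insert (restrict f L) \<Phi>"
  have finM: "finite M" unfolding M_def using finPhi by simp
  have "card M = Suc (card \<Phi>)" unfolding M_def using finPhi fnot by simp
  then have lt: "card Y < card M" using Y(3) by simp
  obtain c where c: "\<exists>\<phi>\<in>M. c \<phi> \<noteq> 0" "\<forall>b\<in>Y. (\<Sum>\<phi>\<in>M. c \<phi> * \<phi> b) = 0"
    using LA_left[OF Y(1) finM lt, of "\<lambda>\<phi> b. \<phi> b"] by blast
  have good: "\<exists>\<sigma>. ring_automorphism \<sigma> \<and> (\<forall>k\<in>K. \<sigma> k = k) \<and> \<phi> = restrict \<sigma> L" if "\<phi> \<in> M" for \<phi>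
  proof (cases "\<phi> = restrict f L")
    case True
    have "ring_automorphism f \<and> (\<forall>k\<in>K. f k = k)" using f unfolding Gal_def by simp
    then show ?thesis using True by blast
  next
    case False
    then have "\<phi> \<in> PhiX X" using that unfolding M_def \<Phi>_def by simp
    then obtain g where g: "g \<in> carrier G" "\<phi> = restrict (act g) (LX X)"
      unfolding PhiX_def by (rule imageE)
    have "ring_automorphism (act g) \<and> (\<forall>k\<in>K. act g k = k)"
      using act_Gal[OF g(1)] unfolding Gal_def by simp
    then show ?thesis using g(2) unfolding L_def by blast
  qed
  have lin: "\<phi> y = (\<Sum>b\<in>Y. \<phi> b * k b)"
    if \<phi>: "\<phi> \<in> M" and y: "y \<in> L" and k: "\<forall>b\<in>Y. k b \<in> K" and yk: "y = (\<Sum>b\<in>Y. b * k b)" for \<phi> y k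
  proof -
    obtain \<sigma> where \<sigma>: "ring_automorphism \<sigma>" "\<forall>k\<in>K. \<sigma> k = k" "\<phi> = restrict \<sigma> L"
      using good[OF \<phi>] by blast
    have "\<phi> y = \<sigma> (\<Sum>b\<in>Y. b * k b)" using \<sigma>(3) y yk by simp
    also have "\<dots> = (\<Sum>b\<in>Y. \<sigma> (b * k b))" by (rule ra_sum[OF \<sigma>(1)])
    also have "\<dots> = (\<Sum>b\<in>Y. \<sigma> b * \<sigma> (k b))" using ra_mult[OF \<sigma>(1)] by simp
    also have "\<dots> = (\<Sum>b\<in>Y. \<phi> b * k b)" using \<sigma>(2,3) k Y(2) by (intro sum.cong) auto
    finally show ?thesis .
  qed
  have rel: "(\<Sum>\<phi>\<in>M. c \<phi> * \<phi> y) = 0" if y: "y \<in> L" for y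
  proof -
    obtain k where k: "\<forall>b\<in>Y. k b \<in> K" "y = (\<Sum>b\<in>Y. b * k b)"
      using Y(4) y unfolding right_span_def by blast
    have "(\<Sum>\<phi>\<in>M. c \<phi> * \<phi> y) = (\<Sum>\<phi>\<in>M. c \<phi> * (\<Sum>b\<in>Y. \<phi> b * k b))"
      using lin y k by (intro sum.cong) auto
    also have "\<dots> = (\<Sum>\<phi>\<in>M. \<Sum>b\<in>Y. c \<phi> * \<phi> b * k b)" by (simp add: sum_distrib_left mult.assoc)
    also have "\<dots> = (\<Sum>b\<in>Y. \<Sum>\<phi>\<in>M. c \<phi> * \<phi> b * k b)" by (rule sum.swap)
    also have "\<dots> = (\<Sum>b\<in>Y. (\<Sum>\<phi>\<in>M. c \<phi> * \<phi> b) * k b)" by (simp add: sum_distrib_right)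
    also have "\<dots> = 0" using c(2) by simp
    finally show ?thesis .
  qed
  have L1: "1 \<in> L" and Lmul: "\<And>y z. y\<in>L \<Longrightarrow> z\<in>L \<Longrightarrow> z * y \<in> L"
    using Lsub unfolding is_subfield_def by auto
  have "\<forall>\<phi>\<in>M. c \<phi> = 0"
  proof (rule dedekind_outer[OF outer KL L1 Lmul finM _ _ _ _ rel])
    fix \<phi> y z assume a: "\<phi> \<in> M" "y \<in> L" "z \<in> L"
    obtain \<sigma> where \<sigma>: "ring_automorphism \<sigma>" "\<phi> = restrict \<sigma> L" using good[OF a(1)] by blast
    show "\<phi> (z * y) = \<phi> z * \<phi> y" using Lmul[OF a(2,3)] a(2,3) ra_mult[OF \<sigma>(1)] \<sigma>(2) by simp
  next
    fix \<phi> assume a: "\<phi> \<in> M"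
    obtain \<sigma> where \<sigma>: "ring_automorphism \<sigma>" "\<phi> = restrict \<sigma> L" using good[OF a(1)] by blast
    show "\<phi> 1 = 1" using L1 ra_1[OF \<sigma>(1)] \<sigma>(2) by simp
  next
    fix \<phi> k assume a: "\<phi> \<in> M" "k \<in> K"
    obtain \<sigma> where \<sigma>: "\<forall>k\<in>K. \<sigma> k = k" "\<phi> = restrict \<sigma> L" using good[OF a(1)] by blast
    show "\<phi> k = k" using a(2) KL \<sigma> by auto
  next
    fix \<phi> \<psi> assume a: "\<phi> \<in> M" "\<psi> \<in> M" "\<forall>y\<in>L. \<phi> y = \<psi> y"
    have ext: "ch \<in> extensional L" if chM: "ch \<in> M" for ch
    proof -
      obtain \<sigma> where "ch = restrict \<sigma> L" using good[OF chM] by blast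
      then show ?thesis by simp
    qed
    have "\<phi> \<in> extensional L" "\<psi> \<in> extensional L" using ext a(1,2) by auto
    then show "\<phi> = \<psi>" using a(3) by (intro extensionalityI) auto
  qed (auto)
  then show False using c(1) by blast
qed

lemma Gal_eq:
  assumes outer: "outer_ext K"
  shows "Gal K = act ` carrier G"
proof
  show "act ` carrier G \<subseteq> Gal K" using act_Gal by blast
  show "Gal K \<subseteq> act ` carrier G"
  proof
    fix f assume f: "f \<in> Gal K"
    define C where "C x = {g \<in> carrier G. act g x = f x}" for x
    have closed: "closedin T (C x)" for x
    proof -
      have "openin T (topspace T - C x)"
      proof (subst openin_subopen, intro ballI)
        fix g assume g: "g \<in> topspace T - C x"
        then have gG: "g \<in> carrier G" and gx: "act g x \<noteq> f x" using topsp unfolding C_def by auto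
        define V where "V = {h \<in> topspace T. inv g \<otimes> h \<in> SX {x}}"
        have "openin T V" unfolding V_def by (rule coset_open[OF gG SX_open]) simp
        moreover have "g \<in> V" unfolding V_def using g gG SX_one by simp
        moreover have "V \<subseteq> topspace T - C x"
        proof
          fix h assume h: "h \<in> V"
          then have hG: "h \<in> carrier G" and s: "inv g \<otimes> h \<in> SX {x}" unfolding V_def using topsp by auto
          have "h = g \<otimes> (inv g \<otimes> h)" using gG hG by (simp add: m_assoc[symmetric])
          then have "act h x = act g (act (inv g \<otimes> h) x)" using act_mult[of g "inv g \<otimes> h" x] gG hG by simp
          also have "\<dots> = act g x" using s unfolding SX_def by simp
          finally show "h \<in> topspace T - C x" using gx hG topsp unfolding C_def by auto
        qed
        ultimately show "\<exists>V. openin T V \<and> g \<in> V \<and> V \<subseteq> topspace T - C x" by blast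
      qed
      then show ?thesis unfolding closedin_def using topsp unfolding C_def by auto
    qed
    have fip: "\<Inter>F \<noteq> {}" if F: "finite F" "F \<subseteq> range C" for F
    proof -
      obtain X where X: "X \<subseteq> UNIV" "finite X" "F = C ` X" using F finite_subset_image by metis
      show ?thesis
      proof (cases "X = {}")
        case True then show ?thesis using X by simp
      next
        case False
        obtain g where g: "g \<in> carrier G" "\<forall>y\<in>LX X. act g y = f y"
          using local_agree[OF outer f X(2)] by blast
        then have "g \<in> \<Inter>F" using X(3) X_LX[of X] unfolding C_def by auto
        then show ?thesis by blast
      qed
    qed
    have "\<Inter>(range C) \<noteq> {}"
      using compactT unfolding compact_space_fip using closed fip by blast
    then obtain g where "g \<in> \<Inter>(range C)" by blast
    then have g: "g \<in> carrier G" "\<forall>x. act g x = f x" unfolding C_def by auto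
    then have "f = act g" by (intro ext) simp
    then show "f \<in> act ` carrier G" using g(1) by blast
  qed
qed

end


theorem lemma3:
  fixes G :: "('g, 'm) monoid_scheme" and T :: "'g topology"
    and act :: "'g \<Rightarrow> 'a::division_ring \<Rightarrow> 'a"
  assumes "profinite_group G T"
    and "action_by_automorphisms G act"
    and "inj_on act (carrier G)"
    and "\<And>x. openin T {g \<in> carrier G. act g x = x}"
    and "outer_ext (fixed_field G act)"
  shows "algebraic_ext (fixed_field G act) \<and> galois_ext (fixed_field G act)
         \<and> Gal (fixed_field G act) = act ` carrier G"
proof -
  have grp: "group G" using assms(1) unfolding profinite_group_def topological_group_on_def by blast
  interpret A: artin_setup G T act
    using grp assms(1,2,4) by (simp add: artin_setup_def artin_setup_axioms_def)
  have KK: "A.K = fixed_field G act" by (rule A.K_def)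
  show ?thesis using A.algebraic A.galois A.Gal_eq assms(5) unfolding KK by simp
qed

end
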